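(* Let $G=(V,E)$ be an edge-weighted graph and consider a non-contractive embedding of its shortest-path metric $(V,d_V)$ into an HST $T$. Then for every $u,v\in V$, the set of edges $e=(x,y)\in E$ with $d_T(e)\ge d_T(u,v)$ is a cut-set for $u$ and $v$, i.e. every path in $G$ from $u$ to $v$ contains such an edge.
   Context: Here $d_T(e)$ for $e=(x,y)$ denotes the distance in $T$ between the images of $x$ and $y$, and $d_T(u,v)$ the distance between the images of $u,v$. An HST ($\mu$-HST, $\mu\ge1$... in the paper $\mu>1$) metric is the metric on the leaves of a rooted tree where each node $w$ has a label $\Delta(w)\ge0$, $\Delta(w)=0$ iff $w$ is a leaf, and $\Delta(w)\le\Delta(w')/\mu$ whenever $w$ is a child of $w'$; the distance between leaves is the label of their least common ancestor. The embedding maps points of $V$ to leaves and is non-contractive: $d_T(x,y)\ge d_V(x,y)$. *)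

theory Defs
  imports Complex_Main "HOL-Library.Sublist"
begin

definition weighted_graph :: "'a set \<Rightarrow> ('a \<times> 'a) set \<Rightarrow> ('a \<times> 'a \<Rightarrow> real) \<Rightarrow> bool" where
  "weighted_graph V E w \<longleftrightarrow> finite V \<and> E \<subseteq> V \<times> V \<and> sym E \<and>
     (\<forall>(x,y)\<in>E. w (x,y) > 0 \<and> w (x,y) = w (y,x))"

definition edges_of :: "'a list \<Rightarrow> ('a \<times> 'a) list" where
  "edges_of xs = zip xs (tl xs)"

definition is_path :: "('a \<times> 'a) set \<Rightarrow> 'a list \<Rightarrow> 'a \<Rightarrow> 'a \<Rightarrow> bool" where
  "is_path E xs u v \<longleftrightarrow> xs \<noteq> [] \<and> hd xs = u \<and> last xs = v \<and> set (edges_of xs) \<subseteq> E"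

definition path_weight :: "('a \<times> 'a \<Rightarrow> real) \<Rightarrow> 'a list \<Rightarrow> real" where
  "path_weight w xs = sum_list (map w (edges_of xs))"

definition connected_graph :: "'a set \<Rightarrow> ('a \<times> 'a) set \<Rightarrow> bool" where
  "connected_graph V E \<longleftrightarrow> (\<forall>u\<in>V. \<forall>v\<in>V. \<exists>xs. is_path E xs u v)"

definition sp_dist :: "('a \<times> 'a) set \<Rightarrow> ('a \<times> 'a \<Rightarrow> real) \<Rightarrow> 'a \<Rightarrow> 'a \<Rightarrow> real" where
  "sp_dist E w u v = Inf {path_weight w xs | xs. is_path E xs u v}"

text \<open>A finite rooted tree, nodes represented by their address (list of child
  indices) from the root []: a finite, nonempty, prefix-closed set of lists.\<close>
definition rooted_tree :: "'n list set \<Rightarrow> bool" where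
  "rooted_tree T \<longleftrightarrow> finite T \<and> [] \<in> T \<and> (\<forall>w\<in>T. \<forall>p. prefix p w \<longrightarrow> p \<in> T)"

definition tree_leaf :: "'n list set \<Rightarrow> 'n list \<Rightarrow> bool" where
  "tree_leaf T w \<longleftrightarrow> w \<in> T \<and> \<not> (\<exists>i. w @ [i] \<in> T)"

definition is_HST :: "real \<Rightarrow> 'n list set \<Rightarrow> ('n list \<Rightarrow> real) \<Rightarrow> bool" where
  "is_HST \<mu> T \<Delta> \<longleftrightarrow> \<mu> > 1 \<and> rooted_tree T \<and>
     (\<forall>w\<in>T. \<Delta> w \<ge> 0 \<and> (\<Delta> w = 0 \<longleftrightarrow> tree_leaf T w)) \<and>
     (\<forall>w i. w @ [i] \<in> T \<longrightarrow> \<Delta> (w @ [i]) \<le> \<Delta> w / \<mu>)"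

text \<open>HST distance between leaves: label of the least common ancestor.\<close>
definition hst_dist :: "('n list \<Rightarrow> real) \<Rightarrow> 'n list \<Rightarrow> 'n list \<Rightarrow> real" where
  "hst_dist \<Delta> a b = \<Delta> (longest_common_prefix a b)"

definition noncontractive_embedding ::
  "'a set \<Rightarrow> ('a \<Rightarrow> 'a \<Rightarrow> real) \<Rightarrow> 'n list set \<Rightarrow> ('n list \<Rightarrow> real) \<Rightarrow> ('a \<Rightarrow> 'n list) \<Rightarrow> bool" where
  "noncontractive_embedding V d T \<Delta> f \<longleftrightarrow>
     (\<forall>x\<in>V. tree_leaf T (f x)) \<and> (\<forall>x\<in>V. \<forall>y\<in>V. hst_dist \<Delta> (f x) (f y) \<ge> d x y)"

end

theory Submission
  imports Defs
begin

lemma hst_mono_app: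
  assumes H: "is_HST \<mu> T \<Delta>"
  shows "p @ r \<in> T \<Longrightarrow> \<Delta> (p @ r) \<le> \<Delta> p"
proof (induction r rule: rev_induct)
  case Nil
  then show ?case by simp
next
  case (snoc i r)
  have rt: "rooted_tree T" and mu: "\<mu> > 1" using H by (auto simp: is_HST_def)
  have T1: "p @ r \<in> T" using rt snoc.prems unfolding rooted_tree_def
    by (metis append.assoc prefix_def)
  have c: "\<Delta> (p @ r @ [i]) \<le> \<Delta> (p @ r) / \<mu>" using H snoc.prems
    unfolding is_HST_def by (metis append.assoc)
  have nn: "\<Delta> (p @ r) \<ge> 0" using H T1 unfolding is_HST_def by blast
  have "\<Delta> (p @ r) / \<mu> \<le> \<Delta> (p @ r)" using nn mu
    by (simp add: divide_le_eq_1 divide_le_eq mult_le_cancel_left1)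
  then show ?case using c snoc.IH T1 by simp
qed

lemma hst_mono:
  assumes H: "is_HST \<mu> T \<Delta>" and "prefix p q" and "q \<in> T"
  shows "\<Delta> q \<le> \<Delta> p"
  using assms hst_mono_app[OF H] unfolding prefix_def by blast

lemma ultra:
  assumes H: "is_HST \<mu> T \<Delta>" and a: "a \<in> T" 
  shows "hst_dist \<Delta> a c \<le> max (hst_dist \<Delta> a b) (hst_dist \<Delta> b c)"
proof -
  let ?p1 = "longest_common_prefix a b" and ?p2 = "longest_common_prefix b c"
    and ?q = "longest_common_prefix a c"
  have rt: "rooted_tree T" using H by (auto simp: is_HST_def)
  have qT: "?q \<in> T" using rt a longest_common_prefix_prefix1 unfolding rooted_tree_def by blast
  have "prefix ?p1 ?p2 \<or> prefix ?p2 ?p1"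
    by (rule prefix_same_cases[OF longest_common_prefix_prefix2 longest_common_prefix_prefix1])
  then show ?thesis
  proof
    assume "prefix ?p1 ?p2"
    then have "prefix ?p1 c" using longest_common_prefix_prefix2 prefix_order.trans by blast
    then have "prefix ?p1 ?q" using longest_common_prefix_prefix1 longest_common_prefix_max_prefix by blast
    then have "\<Delta> ?q \<le> \<Delta> ?p1" using hst_mono[OF H _ qT] by blast
    then show ?thesis unfolding hst_dist_def by simp
  next
    assume "prefix ?p2 ?p1"
    then have "prefix ?p2 a" using longest_common_prefix_prefix1 prefix_order.trans by blast
    then have "prefix ?p2 ?q" using longest_common_prefix_prefix2 longest_common_prefix_max_prefix by blast
    then have "\<Delta> ?q \<le> \<Delta> ?p2" using hst_mono[OF H _ qT] by blast
    then show ?thesis unfolding hst_dist_def by simp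
  qed
qed

lemma path_edge:
  fixes D :: "'a \<Rightarrow> 'a \<Rightarrow> real"
  assumes U: "\<And>a b c. a \<in> S \<Longrightarrow> D a c \<le> max (D a b) (D b c)"
  shows "set xs \<subseteq> S \<Longrightarrow> length xs \<ge> 2 \<Longrightarrow>
     \<exists>(x,y)\<in>set (edges_of xs). D (hd xs) (last xs) \<le> D x y"
proof (induction xs)
  case Nil then show ?case by simp
next
  case (Cons a xs)
  then obtain b rest where xs: "xs = b # rest" by (cases xs) auto
  show ?case
  proof (cases rest)
    case Nil
    then show ?thesis using xs by (auto simp: edges_of_def)
  next
    case (Cons c r)
    then have "\<exists>(x,y)\<in>set (edges_of xs). D (hd xs) (last xs) \<le> D x y"
      using Cons.IH Cons.prems xs by auto
    then obtain x y where xy: "(x,y) \<in> set (edges_of xs)" "D b (last xs) \<le> D x y"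
      using xs by auto
    have e1: "(a,b) \<in> set (edges_of (a # xs))" using xs by (simp add: edges_of_def)
    have e2: "(x,y) \<in> set (edges_of (a # xs))" using xy xs by (simp add: edges_of_def)
    have aS: "a \<in> S" using Cons.prems by simp
    have "D a (last xs) \<le> max (D a b) (D b (last xs))" using U[OF aS] .
    moreover have "last (a # xs) = last xs" using xs by simp
    ultimately have "D (hd (a # xs)) (last (a # xs)) \<le> D a b \<or>
        D (hd (a # xs)) (last (a # xs)) \<le> D x y" using xy by auto
    then show ?thesis using e1 e2 by blast
  qed
qed

theorem proposition5p7:
  fixes V :: "'a set" and E :: "('a \<times> 'a) set" and w :: "'a \<times> 'a \<Rightarrow> real"
    and \<mu> :: real and T :: "'n list set" and \<Delta> :: "'n list \<Rightarrow> real" and f :: "'a \<Rightarrow> 'n list"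
  assumes G: "weighted_graph V E w" and conn: "connected_graph V E"
    and H: "is_HST \<mu> T \<Delta>"
    and emb: "noncontractive_embedding V (sp_dist E w) T \<Delta> f"
    and u: "u \<in> V" and v: "v \<in> V" and uv: "u \<noteq> v"
  shows "\<forall>xs. is_path E xs u v \<longrightarrow>
           (\<exists>(x, y) \<in> set (edges_of xs). (x, y) \<in> E \<and>
               hst_dist \<Delta> (f x) (f y) \<ge> hst_dist \<Delta> (f u) (f v))"
proof (intro allI impI)
  fix xs assume p: "is_path E xs u v"
  have EV: "E \<subseteq> V \<times> V" using G by (simp add: weighted_graph_def)
  have len: "length xs \<ge> 2"
  proof (rule ccontr)
    assume "\<not> 2 \<le> length xs"
    then obtain a where "xs = [a]" using p unfolding is_path_def
      by (cases xs; cases "tl xs") auto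
    then show False using p uv by (auto simp: is_path_def)
  qed
  have sub: "set xs \<subseteq> V"
  proof
    fix z assume z: "z \<in> set xs"
    then obtain i where i: "i < length xs" "xs ! i = z" by (auto simp: in_set_conv_nth)
    show "z \<in> V"
    proof (cases "i + 1 < length xs")
      case True
      then have "(xs ! i, xs ! (i+1)) \<in> set (edges_of xs)"
        unfolding edges_of_def by (auto simp: in_set_conv_nth nth_tl intro!: exI[of _ i])
      then show ?thesis using p EV i unfolding is_path_def by auto
    next
      case False
      then have "i = length xs - 1" using i by simp
      then have "z = last xs" using i len by (metis last_conv_nth list.size(3) not_numeral_le_zero)
      then show ?thesis using p v by (simp add: is_path_def)
    qed
  qed
  have leaf: "\<And>x. x \<in> V \<Longrightarrow> f x \<in> T" using emb
    unfolding noncontractive_embedding_def tree_leaf_def by blast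
  have U: "\<And>a b c. a \<in> V \<Longrightarrow> hst_dist \<Delta> (f a) (f c) \<le>
      max (hst_dist \<Delta> (f a) (f b)) (hst_dist \<Delta> (f b) (f c))"
    using ultra[OF H leaf] by blast
  obtain x y where "(x,y) \<in> set (edges_of xs)"
     "hst_dist \<Delta> (f (hd xs)) (f (last xs)) \<le> hst_dist \<Delta> (f x) (f y)"
    using path_edge[of V "\<lambda>a b. hst_dist \<Delta> (f a) (f b)", OF U sub len] by auto
  then show "\<exists>(x, y) \<in> set (edges_of xs). (x, y) \<in> E \<and>
               hst_dist \<Delta> (f x) (f y) \<ge> hst_dist \<Delta> (f u) (f v)"
    using p unfolding is_path_def by auto
qed

end
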